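(* Let $\mathcal{S}=(\mathscr{X},\nabla_{\mathcal{S}})$ and $\mathcal{T}=(\mathscr{Y},\nabla_{\mathcal{T}})$ be non-commutative spacetimes and let $f:\mathcal{S}\to\mathcal{T}$ be a geometric map that has a left adjoint $f_!:\mathscr{Y}\to\mathscr{X}$ (i.e. $f_!(y)\le x$ iff $y\le f(x)$). Then $f$ is logical if and only if $f_!(f(b)\otimes\nabla_{\mathcal{T}}a)=b\otimes\nabla_{\mathcal{S}}f_!(a)$ for all $a\in\mathscr{Y}$ and $b\in\mathscr{X}$.
   Context: A monoidal poset is a poset with a monoid structure whose multiplication is monotone in each argument. A quantale is a monoidal poset with all joins whose multiplication distributes over arbitrary joins in each argument. A monotone map between monoidal posets is oplax monoidal if $f(e)\le e$ and $f(a\otimes b)\le f(a)\otimes f(b)$, and strict monoidal if $f(e)=e$ and $f(a\otimes b)=f(a)\otimes f(b)$. A non-commutative spacetime is a pair $(\mathscr{X},\nabla)$ with $\mathscr{X}$ a quantale and $\nabla:\mathscr{X}\to\mathscr{X}$ join preserving and oplax monoidal. For such $\mathcal{S}$, $\nabla$ has a right adjoint $\Box$, and the implication of $\mathcal{S}$ is $a\to_{\mathcal{S}}b=\Box(a\Rightarrow b)$, where $\Rightarrow$ is the right adjoint of $a\otimes(-)$ in $\mathscr{X}$; equivalently $a\otimes\nabla b\le c$ iff $b\le a\to_{\mathcal{S}}c$. A geometric map $f:\mathcal{S}\to\mathcal{T}$ is a join-preserving strict monoidal map $f:\mathscr{X}\to\mathscr{Y}$ with $f\nabla_{\mathcal{S}}=\nabla_{\mathcal{T}}f$;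 it is logical if moreover $f(a\to_{\mathcal{S}}b)=f(a)\to_{\mathcal{T}}f(b)$ for all $a,b\in\mathscr{X}$. *)

theory Defs
  imports Main
begin

definition quantale :: "('a::complete_lattice \<Rightarrow> 'a \<Rightarrow> 'a) \<Rightarrow> 'a \<Rightarrow> bool" where
  "quantale m e \<longleftrightarrow>
     (\<forall>a b c. m (m a b) c = m a (m b c)) \<and>
     (\<forall>a. m e a = a) \<and> (\<forall>a. m a e = a) \<and>
     (\<forall>a b c. b \<le> c \<longrightarrow> m a b \<le> m a c \<and> m b a \<le> m c a) \<and>
     (\<forall>a A. m a (Sup A) = Sup ((\<lambda>x. m a x) ` A)) \<and>
     (\<forall>a A. m (Sup A) a = Sup ((\<lambda>x. m x a) ` A))"

definition join_preserving :: "('a::complete_lattice \<Rightarrow> 'b::complete_lattice) \<Rightarrow> bool" where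
  "join_preserving f \<longleftrightarrow> (\<forall>A. f (Sup A) = Sup (f ` A))"

definition oplax_monoidal ::
  "('a::complete_lattice \<Rightarrow> 'a \<Rightarrow> 'a) \<Rightarrow> 'a \<Rightarrow> ('b::complete_lattice \<Rightarrow> 'b \<Rightarrow> 'b) \<Rightarrow> 'b \<Rightarrow> ('a \<Rightarrow> 'b) \<Rightarrow> bool" where
  "oplax_monoidal mX eX mY eY f \<longleftrightarrow> mono f \<and> f eX \<le> eY \<and> (\<forall>a b. f (mX a b) \<le> mY (f a) (f b))"

definition strict_monoidal ::
  "('a::complete_lattice \<Rightarrow> 'a \<Rightarrow> 'a) \<Rightarrow> 'a \<Rightarrow> ('b::complete_lattice \<Rightarrow> 'b \<Rightarrow> 'b) \<Rightarrow> 'b \<Rightarrow> ('a \<Rightarrow> 'b) \<Rightarrow> bool" where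
  "strict_monoidal mX eX mY eY f \<longleftrightarrow> mono f \<and> f eX = eY \<and> (\<forall>a b. f (mX a b) = mY (f a) (f b))"

definition nc_spacetime :: "('a::complete_lattice \<Rightarrow> 'a \<Rightarrow> 'a) \<Rightarrow> 'a \<Rightarrow> ('a \<Rightarrow> 'a) \<Rightarrow> bool" where
  "nc_spacetime m e n \<longleftrightarrow> quantale m e \<and> join_preserving n \<and> oplax_monoidal m e m e n"

definition box :: "('a::complete_lattice \<Rightarrow> 'a) \<Rightarrow> 'a \<Rightarrow> 'a" where
  "box n a = Sup {b. n b \<le> a}"

definition rres :: "('a::complete_lattice \<Rightarrow> 'a \<Rightarrow> 'a) \<Rightarrow> 'a \<Rightarrow> 'a \<Rightarrow> 'a" where
  "rres m a b = Sup {c. m a c \<le> b}"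

definition st_imp :: "('a::complete_lattice \<Rightarrow> 'a \<Rightarrow> 'a) \<Rightarrow> ('a \<Rightarrow> 'a) \<Rightarrow> 'a \<Rightarrow> 'a \<Rightarrow> 'a" where
  "st_imp m n a b = box n (rres m a b)"

definition geometric_map ::
  "('a::complete_lattice \<Rightarrow> 'a \<Rightarrow> 'a) \<Rightarrow> 'a \<Rightarrow> ('a \<Rightarrow> 'a) \<Rightarrow>
   ('b::complete_lattice \<Rightarrow> 'b \<Rightarrow> 'b) \<Rightarrow> 'b \<Rightarrow> ('b \<Rightarrow> 'b) \<Rightarrow> ('a \<Rightarrow> 'b) \<Rightarrow> bool" where
  "geometric_map mX eX nX mY eY nY f \<longleftrightarrow>
     join_preserving f \<and> strict_monoidal mX eX mY eY f \<and> (\<forall>a. f (nX a) = nY (f a))"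

definition logical_map ::
  "('a::complete_lattice \<Rightarrow> 'a \<Rightarrow> 'a) \<Rightarrow> 'a \<Rightarrow> ('a \<Rightarrow> 'a) \<Rightarrow>
   ('b::complete_lattice \<Rightarrow> 'b \<Rightarrow> 'b) \<Rightarrow> 'b \<Rightarrow> ('b \<Rightarrow> 'b) \<Rightarrow> ('a \<Rightarrow> 'b) \<Rightarrow> bool" where
  "logical_map mX eX nX mY eY nY f \<longleftrightarrow>
     geometric_map mX eX nX mY eY nY f \<and>
     (\<forall>a b. f (st_imp mX nX a b) = st_imp mY nY (f a) (f b))"

end

theory Submission
  imports Defs
begin

lemma st_galois:
  assumes "nc_spacetime m e n"
  shows "m a (n c) \<le> b \<longleftrightarrow> c \<le> st_imp m n a b"
proof -
  have q: "quantale m e" and jp: "join_preserving n" and mo: "mono n"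
    using assms by (auto simp: nc_spacetime_def oplax_monoidal_def)
  have rr1: "m a (rres m a b) \<le> b"
  proof -
    have "m a (rres m a b) = Sup ((\<lambda>x. m a x) ` {c. m a c \<le> b})"
      using q unfolding quantale_def rres_def by blast
    also have "\<dots> \<le> b" by (auto intro: Sup_least)
    finally show ?thesis .
  qed
  have rr2: "\<And>c. m a c \<le> b \<Longrightarrow> c \<le> rres m a b"
    unfolding rres_def by (auto intro: Sup_upper)
  have bx1: "\<And>x. n (box n x) \<le> x"
  proof -
    fix x
    have "n (box n x) = Sup (n ` {b. n b \<le> x})"
      using jp unfolding join_preserving_def box_def by blast
    also have "\<dots> \<le> x" by (auto intro: Sup_least)
    finally show "n (box n x) \<le> x" .
  qed
  have bx2: "\<And>c x. n c \<le> x \<Longrightarrow> c \<le> box n x"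
    unfolding box_def by (auto intro: Sup_upper)
  have mm: "\<And>x y. x \<le> y \<Longrightarrow> m a x \<le> m a y"
    using q unfolding quantale_def by blast
  show ?thesis
  proof
    assume "m a (n c) \<le> b"
    then show "c \<le> st_imp m n a b" unfolding st_imp_def using rr2 bx2 by blast
  next
    assume "c \<le> st_imp m n a b"
    then have "n c \<le> n (box n (rres m a b))" using mo unfolding st_imp_def by (simp add: monoD)
    then have "n c \<le> rres m a b" using bx1 order_trans by blast
    then show "m a (n c) \<le> b" using mm rr1 order_trans by blast
  qed
qed

theorem theorem5p12:
  fixes mX :: "'a::complete_lattice \<Rightarrow> 'a \<Rightarrow> 'a" and eX :: 'a and nX :: "'a \<Rightarrow> 'a"
    and mY :: "'b::complete_lattice \<Rightarrow> 'b \<Rightarrow> 'b" and eY :: 'b and nY :: "'b \<Rightarrow> 'b"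
    and f :: "'a \<Rightarrow> 'b" and fl :: "'b \<Rightarrow> 'a"
  assumes SX: "nc_spacetime mX eX nX"
    and SY: "nc_spacetime mY eY nY"
    and G: "geometric_map mX eX nX mY eY nY f"
    and adj: "\<forall>x y. fl y \<le> x \<longleftrightarrow> y \<le> f x"
  shows "logical_map mX eX nX mY eY nY f \<longleftrightarrow>
         (\<forall>a b. fl (mY (f b) (nY a)) = mX b (nX (fl a)))"
proof -
  have fmul: "\<And>a b. f (mX a b) = mY (f a) (f b)" and fmono: "mono f"
    and fn: "\<And>a. f (nX a) = nY (f a)"
    using G by (auto simp: geometric_map_def strict_monoidal_def)
  have qY: "quantale mY eY" and nYmono: "mono nY"
    using SY by (auto simp: nc_spacetime_def oplax_monoidal_def)
  have mYm: "\<And>a x y. x \<le> y \<Longrightarrow> mY a x \<le> mY a y"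
    using qY unfolding quantale_def by blast
  have unit: "\<And>y. y \<le> f (fl y)" using adj by blast
  have GX: "\<And>a b c. mX a (nX c) \<le> b \<longleftrightarrow> c \<le> st_imp mX nX a b" using st_galois[OF SX] .
  have GY: "\<And>a b c. mY a (nY c) \<le> b \<longleftrightarrow> c \<le> st_imp mY nY a b" using st_galois[OF SY] .
  have always1: "\<And>a b. f (st_imp mX nX a b) \<le> st_imp mY nY (f a) (f b)"
  proof -
    fix a b
    have "mX a (nX (st_imp mX nX a b)) \<le> b" using GX by blast
    then have "f (mX a (nX (st_imp mX nX a b))) \<le> f b" using fmono by (simp add: monoD)
    then have "mY (f a) (nY (f (st_imp mX nX a b))) \<le> f b" by (simp add: fmul fn)
    then show "f (st_imp mX nX a b) \<le> st_imp mY nY (f a) (f b)" using GY by blast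
  qed
  have always2: "\<And>a b. fl (mY (f b) (nY a)) \<le> mX b (nX (fl a))"
  proof -
    fix a b
    have "nY a \<le> nY (f (fl a))" using unit nYmono by (simp add: monoD)
    then have "mY (f b) (nY a) \<le> f (mX b (nX (fl a)))" by (simp add: fmul fn mYm)
    then show "fl (mY (f b) (nY a)) \<le> mX b (nX (fl a))" using adj by blast
  qed
  show ?thesis
  proof
    assume L: "logical_map mX eX nX mY eY nY f"
    then have lg: "\<And>a b. f (st_imp mX nX a b) = st_imp mY nY (f a) (f b)"
      unfolding logical_map_def by blast
    show "\<forall>a b. fl (mY (f b) (nY a)) = mX b (nX (fl a))"
    proof (intro allI antisym always2)
      fix a b
      let ?c = "fl (mY (f b) (nY a))"
      have "mY (f b) (nY a) \<le> f ?c" using unit by blast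
      then have "a \<le> st_imp mY nY (f b) (f ?c)" using GY by blast
      then have "a \<le> f (st_imp mX nX b ?c)" using lg by simp
      then have "fl a \<le> st_imp mX nX b ?c" using adj by blast
      then show "mX b (nX (fl a)) \<le> ?c" using GX by blast
    qed
  next
    assume H: "\<forall>a b. fl (mY (f b) (nY a)) = mX b (nX (fl a))"
    have "\<And>a b. st_imp mY nY (f a) (f b) \<le> f (st_imp mX nX a b)"
    proof -
      fix a b
      let ?y = "st_imp mY nY (f a) (f b)"
      have "mY (f a) (nY ?y) \<le> f b" using GY by blast
      then have "fl (mY (f a) (nY ?y)) \<le> b" using adj by blast
      then have "mX a (nX (fl ?y)) \<le> b" using H by simp
      then have "fl ?y \<le> st_imp mX nX a b" using GX by blast
      then show "?y \<le> f (st_imp mX nX a b)" using adj by blast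
    qed
    then show "logical_map mX eX nX mY eY nY f"
      unfolding logical_map_def using G always1 by (blast intro: antisym)
  qed
qed

end
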